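(* Let $G$ be a finitely generated group. If there exists an element $x\in G$ whose normal closure in $G$ is abelian and of finite index in $G$, then there exists a finite symmetric generating set $X$ for $G$ with respect to which the geodesic growth of $G$ is polynomial, i.e. there exist $c,d\in\mathbb{N}$ with $\Gamma_{G,X}(n)\le c\,n^d$ for all $n\in\mathbb{N}$.
   Context: For a group $G$ with a finite symmetric generating set $X$ (symmetric meaning $x\in X\Rightarrow x^{-1}\in X$), a word over $X$ is a geodesic if its length equals the word length (with respect to $X$) of the group element it represents. The geodesic growth function $\Gamma_{G,X}(n)$ is the number of geodesic words of length at most $n$, i.e. the number of geodesics of length at most $n$ starting at $1$ in the Cayley graph of $G$ with respect to $X$. *)

theory Defs
  imports "HOL-Algebra.Algebra"
begin

definition word_eval :: "('a, 'b) monoid_scheme \<Rightarrow> 'a list \<Rightarrow> 'a" where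
  "word_eval G w = foldr (\<lambda>x y. x \<otimes>\<^bsub>G\<^esub> y) w \<one>\<^bsub>G\<^esub>"

definition word_length :: "('a, 'b) monoid_scheme \<Rightarrow> 'a set \<Rightarrow> 'a \<Rightarrow> nat" where
  "word_length G S g = Least (\<lambda>n. \<exists>w. set w \<subseteq> S \<and> length w = n \<and> word_eval G w = g)"

definition geodesic :: "('a, 'b) monoid_scheme \<Rightarrow> 'a set \<Rightarrow> 'a list \<Rightarrow> bool" where
  "geodesic G S w \<longleftrightarrow> set w \<subseteq> S \<and> length w = word_length G S (word_eval G w)"

definition geodesic_growth :: "('a, 'b) monoid_scheme \<Rightarrow> 'a set \<Rightarrow> nat \<Rightarrow> nat" where
  "geodesic_growth G S n = card {w. geodesic G S w \<and> length w \<le> n}"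

definition finite_symmetric_generating_set :: "('a, 'b) monoid_scheme \<Rightarrow> 'a set \<Rightarrow> bool" where
  "finite_symmetric_generating_set G S \<longleftrightarrow>
     finite S \<and> S \<subseteq> carrier G \<and> (\<forall>x\<in>S. inv\<^bsub>G\<^esub> x \<in> S) \<and> generate G S = carrier G"

definition finitely_generated :: "('a, 'b) monoid_scheme \<Rightarrow> bool" where
  "finitely_generated G \<longleftrightarrow> (\<exists>S. finite S \<and> S \<subseteq> carrier G \<and> generate G S = carrier G)"

definition normal_closure :: "('a, 'b) monoid_scheme \<Rightarrow> 'a \<Rightarrow> 'a set" where
  "normal_closure G x = generate G ((\<lambda>g. g \<otimes>\<^bsub>G\<^esub> x \<otimes>\<^bsub>G\<^esub> inv\<^bsub>G\<^esub> g) ` carrier G)"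

end

theory Submission
  imports Defs "HOL-Library.Multiset"
begin


context group
begin

lemma inv_cancel_l[simp]: "r \<in> carrier G \<Longrightarrow> y \<in> carrier G \<Longrightarrow> inv r \<otimes> (r \<otimes> y) = y"
  by (simp add: m_assoc[symmetric])

lemma we_Nil[simp]: "word_eval G [] = \<one>" by (simp add: word_eval_def)
lemma we_Cons[simp]: "word_eval G (a # w) = a \<otimes> word_eval G w" by (simp add: word_eval_def)

lemma we_carrier[simp]: "set w \<subseteq> carrier G \<Longrightarrow> word_eval G w \<in> carrier G"
  by (induction w) auto

lemma we_append: "set u \<subseteq> carrier G \<Longrightarrow> set v \<subseteq> carrier G \<Longrightarrow>
   word_eval G (u @ v) = word_eval G u \<otimes> word_eval G v"
  by (induction u) (auto simp: m_assoc)

lemma we_replicate: "a \<in> carrier G \<Longrightarrow> word_eval G (replicate m a) = a [^] m"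
proof (induction m)
  case (Suc m) then show ?case by (metis nat_pow_Suc nat_pow_Suc2 replicate_Suc we_Cons)
qed simp

lemma we_conj: "a \<in> carrier G \<Longrightarrow> set w \<subseteq> carrier G \<Longrightarrow>
   word_eval G (map (\<lambda>c. a \<otimes> c \<otimes> inv a) w) = a \<otimes> word_eval G w \<otimes> inv a"
proof (induction w)
  case Nil then show ?case by simp
next
  case (Cons b w)
  then have b: "b \<in> carrier G" and w: "set w \<subseteq> carrier G" by auto
  have "word_eval G (map (\<lambda>c. a \<otimes> c \<otimes> inv a) (b # w)) = (a \<otimes> b \<otimes> inv a) \<otimes> (a \<otimes> word_eval G w \<otimes> inv a)"
    using Cons by simp
  also have "\<dots> = a \<otimes> (b \<otimes> word_eval G w) \<otimes> inv a"
    using Cons.prems b w by (simp add: m_assoc)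
  finally show ?case by simp
qed

lemma generate_lists:
  assumes "S \<subseteq> carrier G" "h \<in> generate G S"
  shows "\<exists>\<delta>. set \<delta> \<subseteq> S \<union> m_inv G ` S \<and> word_eval G \<delta> = h"
  using assms(2)
proof induction
  case one then show ?case by (rule exI[of _ "[]"]) simp
next
  case (incl h) then show ?case by (intro exI[of _ "[h]"]) (use assms in auto)
next
  case (inv h) then show ?case by (intro exI[of _ "[inv h]"]) (use assms in auto)
next
  case (eng h1 h2)
  then obtain d1 d2 where "set d1 \<subseteq> S \<union> m_inv G ` S" "word_eval G d1 = h1"
     "set d2 \<subseteq> S \<union> m_inv G ` S" "word_eval G d2 = h2" by blast
  moreover have "S \<union> m_inv G ` S \<subseteq> carrier G" using assms by auto
  ultimately have "set d1 \<subseteq> carrier G" "set d2 \<subseteq> carrier G" by auto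
  with \<open>set d1 \<subseteq> S \<union> m_inv G ` S\<close> \<open>set d2 \<subseteq> S \<union> m_inv G ` S\<close> \<open>word_eval G d1 = h1\<close> \<open>word_eval G d2 = h2\<close>
  show ?case by (intro exI[of _ "d1 @ d2"]) (auto simp: we_append)
qed

lemma comm_word:
  assumes "set w \<subseteq> A" "A \<subseteq> carrier G" "\<forall>b\<in>A. a \<otimes> b = b \<otimes> a" "a \<in> carrier G"
  shows "a \<otimes> word_eval G w = word_eval G w \<otimes> a"
  using assms(1)
proof (induction w)
  case Nil then show ?case using assms by simp
next
  case (Cons b w)
  then have b: "b \<in> carrier G" "b \<in> A" and w: "set w \<subseteq> carrier G" using assms by auto
  have "a \<otimes> word_eval G (b # w) = (a \<otimes> b) \<otimes> word_eval G w" using b w assms(4) by (simp add: m_assoc)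
  also have "\<dots> = b \<otimes> (a \<otimes> word_eval G w)" using b w assms by (simp add: m_assoc)
  also have "\<dots> = b \<otimes> (word_eval G w \<otimes> a)" using Cons by simp
  finally show ?case using b w assms by (simp add: m_assoc)
qed

lemma perm_word:
  assumes "A \<subseteq> carrier G" "\<forall>a\<in>A. \<forall>b\<in>A. a \<otimes> b = b \<otimes> a"
  shows "set w1 \<subseteq> A \<Longrightarrow> mset w1 = mset w2 \<Longrightarrow> word_eval G w1 = word_eval G w2"
proof (induction w1 arbitrary: w2)
  case Nil then show ?case by simp
next
  case (Cons a w1)
  then have "a \<in> set w2" by (metis list.set_intros(1) set_mset_mset)
  then obtain p s where w2: "w2 = p @ a # s" by (meson split_list)
  have setw2: "set w2 \<subseteq> A" using Cons(2,3) by (metis set_mset_mset)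
  then have pA: "set p \<subseteq> A" "set s \<subseteq> A" "a \<in> A" using w2 by auto
  have m: "mset w1 = mset (p @ s)" using Cons(3) w2 by simp
  have IH: "word_eval G w1 = word_eval G (p @ s)" using Cons m by auto
  have car: "set p \<subseteq> carrier G" "set s \<subseteq> carrier G" "a \<in> carrier G" using pA assms by auto
  have "word_eval G w2 = word_eval G p \<otimes> (a \<otimes> word_eval G s)"
    using car w2 by (simp add: we_append)
  also have "\<dots> = (word_eval G p \<otimes> a) \<otimes> word_eval G s" using car by (simp add: m_assoc)
  also have "\<dots> = (a \<otimes> word_eval G p) \<otimes> word_eval G s"
    using comm_word[OF pA(1) assms(1) _ car(3)] assms(2) pA by auto
  also have "\<dots> = a \<otimes> word_eval G (p @ s)" using car by (simp add: m_assoc we_append)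
  finally show ?case using IH by simp
qed

lemma conj_pow: "r \<in> carrier G \<Longrightarrow> s \<in> carrier G \<Longrightarrow> (r \<otimes> s \<otimes> inv r) [^] (m::nat) = r \<otimes> s [^] m \<otimes> inv r"
proof (induction m)
  case 0 then show ?case by simp
next
  case (Suc m)
  have "(r \<otimes> s \<otimes> inv r) [^] Suc m = (r \<otimes> s [^] m \<otimes> inv r) \<otimes> (r \<otimes> s \<otimes> inv r)" using Suc by simp
  also have "\<dots> = r \<otimes> (s [^] m \<otimes> (inv r \<otimes> r) \<otimes> s) \<otimes> inv r" using Suc.prems by (simp add: m_assoc)
  also have "\<dots> = r \<otimes> s [^] Suc m \<otimes> inv r" using Suc.prems by simp
  finally show ?case .
qed

end

lemma word_length_le:
  assumes "set w \<subseteq> S"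
  shows "word_length G S (word_eval G w) \<le> length w"
  unfolding word_length_def by (rule Least_le) (use assms in blast)



fun chg :: "'a list \<Rightarrow> nat" where
  "chg (a # b # w) = (if a = b then 0 else 1) + chg (b # w)"
| "chg _ = 0"

definition enc :: "(nat \<times> 'a) list \<Rightarrow> 'a list" where
  "enc bs = concat (map (\<lambda>(l, b). replicate l b) bs)"

lemma rle:
  assumes "set w \<subseteq> A"
  shows "\<exists>bs. w = enc bs \<and> length bs \<le> chg w + 1 \<and> set bs \<subseteq> {1..length w} \<times> A"
  using assms
proof (induction w)
  case Nil then show ?case by (intro exI[of _ "[]"]) (simp add: enc_def)
next
  case (Cons a w)
  show ?case
  proof (cases w)
    case Nil then show ?thesis using Cons by (intro exI[of _ "[(1,a)]"]) (simp add: enc_def)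
  next
    case (Cons c w')
    from Cons.IH Cons.prems obtain bs where bs: "w = enc bs" "length bs \<le> chg w + 1"
      "set bs \<subseteq> {1..length w} \<times> A" by auto
    then obtain l b rest where bsr: "bs = (l, b) # rest"
      using \<open>w = c # w'\<close> by (cases bs) (auto simp: enc_def)
    have l1: "1 \<le> l" using bs(3) bsr by auto
    then have wb: "w = replicate l b @ enc rest" using bs(1) bsr by (simp add: enc_def)
    then have cb: "c = b" using \<open>w = c # w'\<close> l1 by (cases l) auto
    show ?thesis
    proof (cases "a = c")
      case True
      have "a # w = enc ((Suc l, b) # rest)" using wb cb True by (simp add: enc_def)
      moreover have "chg (a # w) = chg w" using True \<open>w = c # w'\<close> by simp
      moreover have "length ((Suc l, b) # rest) \<le> chg (a # w) + 1" using bs(2) bsr calculation(2) by simp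
      moreover have "set ((Suc l, b) # rest) \<subseteq> {1..length (a # w)} \<times> A"
      proof -
        have "(l, b) \<in> set bs" using bsr by simp
        then have "l \<le> length w" "b \<in> A" using bs(3) by auto
        moreover have "set rest \<subseteq> {1..length w} \<times> A" using bs(3) bsr by auto
        moreover have "{1..length w} \<times> A \<subseteq> {1..length (a # w)} \<times> A" by auto
        ultimately show ?thesis by auto
      qed
      ultimately show ?thesis by blast
    next
      case False
      have "a # w = enc ((1, a) # bs)" using bs by (simp add: enc_def)
      moreover have "chg (a # w) = Suc (chg w)" using False \<open>w = c # w'\<close> by simp
      moreover have "length ((1, a) # bs) \<le> chg (a # w) + 1" using bs(2) calculation(2) by simp
      moreover have "set ((1, a) # bs) \<subseteq> {1..length (a # w)} \<times> A"
      proof -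
        have "{1..length w} \<times> A \<subseteq> {1..length (a # w)} \<times> A" by auto
        then show ?thesis using bs(3) Cons.prems by auto
      qed
      ultimately show ?thesis by blast
    qed
  qed
qed

lemma chg_bound:
  "(\<forall>p a b q. w = p @ a # b # q \<longrightarrow> a \<noteq> b \<longrightarrow> \<not> (P a \<and> P b)) \<Longrightarrow>
   chg w + (if w \<noteq> [] \<and> \<not> P (hd w) then 1 else 0) \<le> 2 * length (filter (\<lambda>a. \<not> P a) w)"
proof (induction w rule: chg.induct)
  case (1 a b w)
  have "\<forall>p a' b' q. b # w = p @ a' # b' # q \<longrightarrow> a' \<noteq> b' \<longrightarrow> \<not> (P a' \<and> P b')"
  proof (intro allI impI)
    fix p a' b' q assume "b # w = p @ a' # b' # q" "a' \<noteq> b'"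
    then have "a # b # w = (a # p) @ a' # b' # q" by simp
    then show "\<not> (P a' \<and> P b')" using 1(2) \<open>a' \<noteq> b'\<close> by blast
  qed
  then have IH: "chg (b # w) + (if \<not> P b then 1 else 0) \<le> 2 * length (filter (\<lambda>a. \<not> P a) (b # w))"
    using 1(1) by simp
  have "a \<noteq> b \<longrightarrow> \<not> (P a \<and> P b)" using 1(2)[rule_format, of "[]" a b w] by simp
  then show ?case using IH by (cases "P a"; cases "P b"; cases "a = b") simp_all
qed auto

lemma card_lists_le:
  assumes "finite A"
  shows "card {xs. set xs \<subseteq> A \<and> length xs \<le> k} \<le> (k + 1) * (card A + 1) ^ k"
proof -
  have eq: "{xs. set xs \<subseteq> A \<and> length xs \<le> k} = (\<Union>i\<in>{0..k}. {xs. set xs \<subseteq> A \<and> length xs = i})" by auto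
  have "card {xs. set xs \<subseteq> A \<and> length xs \<le> k} \<le> (\<Sum>i\<in>{0..k}. card {xs. set xs \<subseteq> A \<and> length xs = i})"
    unfolding eq by (rule card_UN_le) simp
  also have "\<dots> = (\<Sum>i\<in>{0..k}. card A ^ i)" using card_lists_length_eq[OF assms] by simp
  also have "\<dots> \<le> (\<Sum>i\<in>{0..k}. (card A + 1) ^ k)"
  proof (rule sum_mono)
    fix i assume "i \<in> {0..k}"
    then have "card A ^ i \<le> (card A + 1) ^ i" by (simp add: power_mono)
    also have "\<dots> \<le> (card A + 1) ^ k" using \<open>i \<in> {0..k}\<close> by (intro power_increasing) auto
    finally show "card A ^ i \<le> (card A + 1) ^ k" .
  qed
  also have "\<dots> = (k + 1) * (card A + 1) ^ k" by simp
  finally show ?thesis .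
qed

lemma count_words:
  assumes "finite XX"
  shows "\<exists>c d. \<forall>n::nat. n \<ge> 1 \<longrightarrow> card {w. set w \<subseteq> XX \<and> length w \<le> n \<and> chg w \<le> J} \<le> c * n ^ d"
proof (intro exI allI impI)
  fix n :: nat assume n: "n \<ge> 1"
  let ?A = "{1..n} \<times> XX"
  let ?B = "{bs. set bs \<subseteq> ?A \<and> length bs \<le> J + 1}"
  have fA: "finite ?A" using assms by simp
  have sub: "{w. set w \<subseteq> XX \<and> length w \<le> n \<and> chg w \<le> J} \<subseteq> enc ` ?B"
  proof
    fix w assume "w \<in> {w. set w \<subseteq> XX \<and> length w \<le> n \<and> chg w \<le> J}"
    then have w: "set w \<subseteq> XX" "length w \<le> n" "chg w \<le> J" by auto
    obtain bs where "w = enc bs" "length bs \<le> chg w + 1" "set bs \<subseteq> {1..length w} \<times> XX"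
      using rle[OF w(1)] by blast
    moreover have "{1..length w} \<times> XX \<subseteq> ?A" using w(2) by auto
    ultimately show "w \<in> enc ` ?B" using w(3) by auto
  qed
  have "card {w. set w \<subseteq> XX \<and> length w \<le> n \<and> chg w \<le> J} \<le> card (enc ` ?B)"
    by (rule card_mono[OF _ sub]) (intro finite_imageI finite_lists_length_le[OF fA])
  also have "\<dots> \<le> card ?B" by (rule card_image_le) (rule finite_lists_length_le[OF fA])
  also have "\<dots> \<le> (J + 2) * (card ?A + 1) ^ (J + 1)" using card_lists_le[OF fA, of "J+1"] by simp
  also have "\<dots> \<le> (J + 2) * (n * (card XX + 1)) ^ (J + 1)"
  proof -
    have "card ?A + 1 \<le> n * (card XX + 1)" using n by (simp add: card_cartesian_product algebra_simps)
    then show ?thesis by (intro mult_le_mono2 power_mono) auto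
  qed
  also have "\<dots> = ((J + 2) * (card XX + 1) ^ (J + 1)) * n ^ (J + 1)"
    by (simp only: power_mult_distrib mult.commute mult.left_commute mult.assoc)
  finally show "card {w. set w \<subseteq> XX \<and> length w \<le> n \<and> chg w \<le> J} \<le> ((J + 2) * (card XX + 1) ^ (J + 1)) * n ^ (J + 1)" .
qed



lemma (in group) main_aux:
  assumes "finitely_generated G"
    and "\<exists>x \<in> carrier G.
           (\<forall>a \<in> normal_closure G x. \<forall>b \<in> normal_closure G x. a \<otimes>\<^bsub>G\<^esub> b = b \<otimes>\<^bsub>G\<^esub> a)
           \<and> finite (rcosets\<^bsub>G\<^esub> (normal_closure G x))"
  shows "\<exists>Y. finite_symmetric_generating_set G Y \<and>
           (\<exists>c d :: nat. \<forall>n :: nat. n \<ge> 1 \<longrightarrow> geodesic_growth G Y n \<le> c * n ^ d)"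
proof -
  from assms(2) obtain x where x: "x \<in> carrier G"
    and commN: "\<forall>a\<in>normal_closure G x. \<forall>b\<in>normal_closure G x. a \<otimes> b = b \<otimes> a"
    and finR: "finite (rcosets (normal_closure G x))" by blast
  define N where "N = normal_closure G x"
  define Cj where "Cj = (\<lambda>g. g \<otimes> x \<otimes> inv g) ` carrier G"
  have Cj_sub: "Cj \<subseteq> carrier G" using x by (auto simp: Cj_def)
  have N_gen: "N = generate G Cj" by (simp add: N_def normal_closure_def Cj_def)
  have subN: "subgroup N G" using generate_is_subgroup[OF Cj_sub] N_gen by simp
  have N_car: "N \<subseteq> carrier G" using subN subgroup.subset by blast
  have comm: "\<forall>a\<in>N. \<forall>b\<in>N. a \<otimes> b = b \<otimes> a" unfolding N_def using commN .
  have finRc: "finite (rcosets N)" unfolding N_def using finR .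
  have Cj_N: "Cj \<subseteq> N" unfolding N_gen using generate.incl[of _ Cj G] by blast
  define rf where "rf = (\<lambda>H. SOME r. r \<in> carrier G \<and> H = N #> r)"
  define R where "R = rf ` (rcosets N)"
  have R_fin: "finite R" using finRc by (simp add: R_def)
  have rf: "\<And>H. H \<in> rcosets N \<Longrightarrow> rf H \<in> carrier G \<and> H = N #> rf H"
  proof -
    fix H assume "H \<in> rcosets N"
    then have "\<exists>r. r \<in> carrier G \<and> H = N #> r" by (auto simp: RCOSETS_def)
    then show "rf H \<in> carrier G \<and> H = N #> rf H" unfolding rf_def by (rule someI_ex)
  qed
  have R_sub: "R \<subseteq> carrier G"
  proof
    fix r assume "r \<in> R"
    then obtain H where "H \<in> rcosets N" "r = rf H" by (auto simp: R_def)
    then show "r \<in> carrier G" using rf by blast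
  qed
  have decomp: "\<And>g. g \<in> carrier G \<Longrightarrow> \<exists>n\<in>N. \<exists>r\<in>R. g = n \<otimes> r"
  proof -
    fix g assume g: "g \<in> carrier G"
    have H: "N #> g \<in> rcosets N" using g by (auto simp: RCOSETS_def)
    have "g = \<one> \<otimes> g" using g by simp
    then have "g \<in> N #> g" using subgroup.one_closed[OF subN] unfolding r_coset_def by blast
    define r0 where "r0 = rf (N #> g)"
    have e: "N #> g = N #> r0" using rf[OF H] unfolding r0_def by blast
    have "g \<in> N #> r0" using \<open>g \<in> N #> g\<close> unfolding e .
    moreover have "r0 \<in> R" using H unfolding r0_def R_def by blast
    ultimately show "\<exists>n\<in>N. \<exists>r\<in>R. g = n \<otimes> r" by (auto simp: r_coset_def)
  qed
  have conj_assoc: "\<And>a r s. a \<in> carrier G \<Longrightarrow> r \<in> carrier G \<Longrightarrow> s \<in> carrier G \<Longrightarrow>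
      a \<otimes> (r \<otimes> s \<otimes> inv r) \<otimes> inv a = (a \<otimes> r) \<otimes> s \<otimes> inv (a \<otimes> r)"
    by (simp add: inv_mult_group m_assoc)
  have key: "\<And>g. g \<in> carrier G \<Longrightarrow> \<exists>r\<in>R. g \<otimes> x \<otimes> inv g = r \<otimes> x \<otimes> inv r"
  proof -
    fix g assume g: "g \<in> carrier G"
    then obtain n r where n: "n \<in> N" and r: "r \<in> R" and gnr: "g = n \<otimes> r" using decomp by blast
    have nc: "n \<in> carrier G" "r \<in> carrier G" using n r N_car R_sub by auto
    have cN: "r \<otimes> x \<otimes> inv r \<in> N" using Cj_N nc(2) by (auto simp: Cj_def)
    have "g \<otimes> x \<otimes> inv g = n \<otimes> (r \<otimes> x \<otimes> inv r) \<otimes> inv n"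
      using conj_assoc[of n r x] nc x gnr by simp
    also have "\<dots> = (r \<otimes> x \<otimes> inv r) \<otimes> n \<otimes> inv n"
    proof -
      have "n \<otimes> (r \<otimes> x \<otimes> inv r) = (r \<otimes> x \<otimes> inv r) \<otimes> n" using comm n cN by blast
      then show ?thesis by simp
    qed
    also have "\<dots> = r \<otimes> x \<otimes> inv r" using nc x by (simp add: m_assoc)
    finally show "\<exists>r\<in>R. g \<otimes> x \<otimes> inv g = r \<otimes> x \<otimes> inv r" using r by blast
  qed
  have inv_conj: "\<And>r. r \<in> carrier G \<Longrightarrow> r \<otimes> inv x \<otimes> inv r = inv (r \<otimes> x \<otimes> inv r)"
    using x by (simp add: inv_mult_group m_assoc)
  define CC where "CC = (\<lambda>r. r \<otimes> x \<otimes> inv r) ` R \<union> (\<lambda>r. r \<otimes> inv x \<otimes> inv r) ` R"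
  have CC_fin: "finite CC" using R_fin by (simp add: CC_def)
  have CC_form: "\<And>v. v \<in> CC \<Longrightarrow> \<exists>r\<in>R. \<exists>s\<in>{x, inv x}. v = r \<otimes> s \<otimes> inv r"
    by (auto simp: CC_def)
  have CC_N: "CC \<subseteq> N"
  proof
    fix v assume "v \<in> CC"
    then obtain r where r: "r \<in> R" and v: "v = r \<otimes> x \<otimes> inv r \<or> v = r \<otimes> inv x \<otimes> inv r"
      by (auto simp: CC_def)
    have rc: "r \<in> carrier G" using r R_sub by auto
    have c: "r \<otimes> x \<otimes> inv r \<in> N" using Cj_N rc by (auto simp: Cj_def)
    show "v \<in> N" using v c inv_conj[OF rc] subgroup.m_inv_closed[OF subN c] by auto
  qed
  have CC_car: "CC \<subseteq> carrier G" using CC_N N_car by auto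
  have CC_comm: "\<forall>a\<in>CC. \<forall>b\<in>CC. a \<otimes> b = b \<otimes> a" using comm CC_N by blast
  have Cj_CC: "Cj \<subseteq> CC"
  proof
    fix v assume "v \<in> Cj"
    then obtain g where g: "g \<in> carrier G" and v: "v = g \<otimes> x \<otimes> inv g" by (auto simp: Cj_def)
    obtain r where "r \<in> R" "g \<otimes> x \<otimes> inv g = r \<otimes> x \<otimes> inv r" using key[OF g] by blast
    then show "v \<in> CC" using v unfolding CC_def by blast
  qed
  have invCj_CC: "m_inv G ` Cj \<subseteq> CC"
  proof
    fix v assume "v \<in> m_inv G ` Cj"
    then obtain g where g: "g \<in> carrier G" and v: "v = inv (g \<otimes> x \<otimes> inv g)" by (auto simp: Cj_def)
    obtain r where r: "r \<in> R" and e: "g \<otimes> x \<otimes> inv g = r \<otimes> x \<otimes> inv r" using key[OF g] by blast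
    have "v = r \<otimes> inv x \<otimes> inv r" using v e inv_conj r R_sub by auto
    then show "v \<in> CC" using r by (auto simp: CC_def)
  qed
  have x_Cj: "x \<in> Cj" using x by (auto simp: Cj_def intro!: image_eqI[of _ _ \<one>])
  have x_CC: "x \<in> CC" "inv x \<in> CC" using x_Cj Cj_CC invCj_CC by auto
  have CC_conj: "\<And>a v. a \<in> carrier G \<Longrightarrow> v \<in> CC \<Longrightarrow> a \<otimes> v \<otimes> inv a \<in> CC"
  proof -
    fix a v assume a: "a \<in> carrier G" and v: "v \<in> CC"
    then obtain r s where r: "r \<in> R" and s: "s \<in> {x, inv x}" and vr: "v = r \<otimes> s \<otimes> inv r"
      using CC_form by blast
    have rc: "r \<in> carrier G" using r R_sub by auto
    have ar: "a \<otimes> r \<in> carrier G" using a rc by simp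
    have eq: "a \<otimes> v \<otimes> inv a = (a \<otimes> r) \<otimes> s \<otimes> inv (a \<otimes> r)" using conj_assoc[OF a rc] s x vr by auto
    show "a \<otimes> v \<otimes> inv a \<in> CC"
    proof (cases "s = x")
      case True
      then have "a \<otimes> v \<otimes> inv a \<in> Cj" using eq ar by (auto simp: Cj_def)
      then show ?thesis using Cj_CC by auto
    next
      case False
      then have "s = inv x" using s by auto
      then have "a \<otimes> v \<otimes> inv a = inv ((a \<otimes> r) \<otimes> x \<otimes> inv (a \<otimes> r))" using eq inv_conj[OF ar] by simp
      moreover have "(a \<otimes> r) \<otimes> x \<otimes> inv (a \<otimes> r) \<in> Cj" using ar by (auto simp: Cj_def)
      ultimately show ?thesis using invCj_CC by auto
    qed
  qed
  have rep: "\<And>g. g \<in> carrier G \<Longrightarrow> \<exists>\<delta> r. set \<delta> \<subseteq> CC \<and> r \<in> R \<and> g = word_eval G \<delta> \<otimes> r"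
  proof -
    fix g assume "g \<in> carrier G"
    then obtain n r where n: "n \<in> N" and r: "r \<in> R" and gnr: "g = n \<otimes> r" using decomp by blast
    obtain \<delta> where "set \<delta> \<subseteq> Cj \<union> m_inv G ` Cj" "word_eval G \<delta> = n"
      using generate_lists[OF Cj_sub] n N_gen by blast
    then show "\<exists>\<delta> r. set \<delta> \<subseteq> CC \<and> r \<in> R \<and> g = word_eval G \<delta> \<otimes> r"
      using r gnr Cj_CC invCj_CC by blast
  qed
  from assms(1) obtain S0 where S0: "finite S0" "S0 \<subseteq> carrier G" "generate G S0 = carrier G"
    by (auto simp: finitely_generated_def)
  define X0 where "X0 = S0 \<union> m_inv G ` S0 \<union> R \<union> m_inv G ` R \<union> {x, inv x}"
  have X0_sub: "X0 \<subseteq> carrier G" using S0 R_sub x by (auto simp: X0_def)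
  have X0_fin: "finite X0" using S0 R_fin by (simp add: X0_def)
  define repf where "repf = (\<lambda>g. SOME p. set (fst p) \<subseteq> CC \<and> snd p \<in> R \<and> g = word_eval G (fst p) \<otimes> snd p)"
  have repf: "\<And>g. g \<in> carrier G \<Longrightarrow> set (fst (repf g)) \<subseteq> CC \<and> snd (repf g) \<in> R \<and> g = word_eval G (fst (repf g)) \<otimes> snd (repf g)"
  proof -
    fix g assume "g \<in> carrier G"
    then have "\<exists>p. set (fst p) \<subseteq> CC \<and> snd p \<in> R \<and> g = word_eval G (fst p) \<otimes> snd p"
    proof -
      obtain \<delta> r where "set \<delta> \<subseteq> CC \<and> r \<in> R \<and> g = word_eval G \<delta> \<otimes> r" using rep \<open>g \<in> carrier G\<close> by blast
      then show ?thesis by (intro exI[of _ "(\<delta>, r)"]) simp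
    qed
    then show "set (fst (repf g)) \<subseteq> CC \<and> snd (repf g) \<in> R \<and> g = word_eval G (fst (repf g)) \<otimes> snd (repf g)"
      unfolding repf_def by (rule someI_ex)
  qed
  define D where "D = Max (insert (length (fst (repf \<one>))) ((\<lambda>(a, r). length (fst (repf (a \<otimes> r)))) ` (X0 \<times> R)))"
  have Dfin: "finite (insert (length (fst (repf \<one>))) ((\<lambda>(a, r). length (fst (repf (a \<otimes> r)))) ` (X0 \<times> R)))"
    using X0_fin R_fin by simp
  have D1: "length (fst (repf \<one>)) \<le> D" unfolding D_def by (rule Max_ge[OF Dfin]) simp
  have D2: "\<And>a r. a \<in> X0 \<Longrightarrow> r \<in> R \<Longrightarrow> length (fst (repf (a \<otimes> r))) \<le> D"
  proof -
    fix a r assume "a \<in> X0" "r \<in> R"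
    then have "length (fst (repf (a \<otimes> r))) \<in> (\<lambda>(a, r). length (fst (repf (a \<otimes> r)))) ` (X0 \<times> R)"
      by (intro image_eqI[of _ _ "(a, r)"]) auto
    then show "length (fst (repf (a \<otimes> r))) \<le> D" unfolding D_def by (intro Max_ge[OF Dfin]) simp
  qed
  define M where "M = Suc D"
  define Ms where "Ms = {x [^] M, inv (x [^] M)}"
  define XX where "XX = X0 \<union> Ms"
  have Ms_sub: "Ms \<subseteq> carrier G" using x by (simp add: Ms_def)
  have XX_sub: "XX \<subseteq> carrier G" using X0_sub Ms_sub by (simp add: XX_def)
  have XX_fin: "finite XX" using X0_fin by (simp add: XX_def Ms_def)
  define nM where "nM = (\<lambda>w. length (filter (\<lambda>a. a \<notin> Ms) w))"
  define mM where "mM = (\<lambda>w. length (filter (\<lambda>a. a \<in> Ms) w))"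
  have Ms_pow: "\<And>a. a \<in> Ms \<Longrightarrow> \<exists>s\<in>{x, inv x}. a = s [^] M"
    using x by (auto simp: Ms_def nat_pow_inv)
  have invariant: "\<And>w. set w \<subseteq> XX \<Longrightarrow> \<exists>\<delta> r. set \<delta> \<subseteq> CC \<and> r \<in> R \<and>
      word_eval G w = word_eval G \<delta> \<otimes> r \<and> length \<delta> \<le> D * nM w + M * mM w + D"
  proof -
    fix w show "set w \<subseteq> XX \<Longrightarrow> \<exists>\<delta> r. set \<delta> \<subseteq> CC \<and> r \<in> R \<and>
      word_eval G w = word_eval G \<delta> \<otimes> r \<and> length \<delta> \<le> D * nM w + M * mM w + D"
    proof (induction w)
      case Nil
      have "set (fst (repf \<one>)) \<subseteq> CC \<and> snd (repf \<one>) \<in> R \<and> \<one> = word_eval G (fst (repf \<one>)) \<otimes> snd (repf \<one>)"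
        using repf by simp
      then show ?case using D1 by (auto simp: nM_def mM_def)
    next
      case (Cons a w)
      then have a: "a \<in> XX" "a \<in> carrier G" and w: "set w \<subseteq> XX" using XX_sub by auto
      from Cons.IH[OF w] obtain \<delta>' r' where d': "set \<delta>' \<subseteq> CC" "r' \<in> R"
        "word_eval G w = word_eval G \<delta>' \<otimes> r'" "length \<delta>' \<le> D * nM w + M * mM w + D" by blast
      have d'c: "set \<delta>' \<subseteq> carrier G" "r' \<in> carrier G" using d' CC_car R_sub by auto
      show ?case
      proof (cases "a \<in> Ms")
        case True
        then obtain s where s: "s \<in> {x, inv x}" "a = s [^] M" using Ms_pow by blast
        have sc: "s \<in> carrier G" "s \<in> CC" using s x x_CC by auto
        let ?\<delta> = "replicate M s @ \<delta>'"
        have e1: "word_eval G ?\<delta> = s [^] M \<otimes> word_eval G \<delta>'"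
          using we_append[of "replicate M s" \<delta>'] we_replicate[of s M] sc d'c by (simp add: set_replicate_conv_if)
        have "word_eval G (a # w) = word_eval G ?\<delta> \<otimes> r'"
          unfolding e1 using d' d'c sc s by (simp add: m_assoc)
        moreover have "set ?\<delta> \<subseteq> CC" using d' sc by auto
        moreover have "length ?\<delta> \<le> D * nM (a # w) + M * mM (a # w) + D"
          using d'(4) True by (simp add: nM_def mM_def)
        ultimately show ?thesis using d' by blast
      next
        case False
        then have aX0: "a \<in> X0" using a by (simp add: XX_def)
        have ar: "a \<otimes> r' \<in> carrier G" using a d'c by simp
        define p where "p = repf (a \<otimes> r')"
        have p: "set (fst p) \<subseteq> CC" "snd p \<in> R" "a \<otimes> r' = word_eval G (fst p) \<otimes> snd p"
          using repf[OF ar] by (auto simp: p_def)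
        have lp: "length (fst p) \<le> D" using D2[OF aX0 d'(2)] by (simp add: p_def)
        let ?\<delta> = "map (\<lambda>c. a \<otimes> c \<otimes> inv a) \<delta>' @ fst p"
        have pc: "set (fst p) \<subseteq> carrier G" "snd p \<in> carrier G" using p CC_car R_sub by auto
        have mc: "set (map (\<lambda>c. a \<otimes> c \<otimes> inv a) \<delta>') \<subseteq> carrier G" using a d'c by auto
        have "word_eval G ?\<delta> \<otimes> snd p = (a \<otimes> word_eval G \<delta>' \<otimes> inv a) \<otimes> (word_eval G (fst p) \<otimes> snd p)"
          using we_append[OF mc pc(1)] we_conj[OF a(2) d'c(1)] pc a d'c by (simp add: m_assoc)
        also have "\<dots> = (a \<otimes> word_eval G \<delta>' \<otimes> inv a) \<otimes> (a \<otimes> r')" using p by simp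
        also have "\<dots> = a \<otimes> (word_eval G \<delta>' \<otimes> r')" using a d'c by (simp add: m_assoc)
        also have "\<dots> = word_eval G (a # w)" using d' by simp
        finally have "word_eval G (a # w) = word_eval G ?\<delta> \<otimes> snd p" by simp
        moreover have "set ?\<delta> \<subseteq> CC" using p d' CC_conj a by auto
        moreover have "length ?\<delta> \<le> D * nM (a # w) + M * mM (a # w) + D"
          using d'(4) False lp by (simp add: nM_def mM_def)
        ultimately show ?thesis using p by blast
      qed
    qed
  qed
  have Ms_X: "x [^] M \<in> XX" "inv (x [^] M) \<in> XX" "inv x [^] M \<in> XX"
    using x by (auto simp: XX_def Ms_def nat_pow_inv)
  have R_X: "\<And>r. r \<in> R \<Longrightarrow> r \<in> XX \<and> inv r \<in> XX" by (auto simp: XX_def X0_def)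
  have x_X: "x \<in> XX" "inv x \<in> XX" by (auto simp: XX_def X0_def)
  have powword: "\<And>s m. s \<in> {x, inv x} \<Longrightarrow> \<exists>ws. set ws \<subseteq> XX \<and> word_eval G ws = s [^] m \<and>
       M * length ws \<le> m + M * M"
  proof -
    fix s m assume s: "s \<in> {x, inv x}"
    have sc: "s \<in> carrier G" using s x by auto
    have sM: "s [^] M \<in> XX" "s \<in> XX" using s Ms_X x_X by auto
    let ?ws = "replicate (m div M) (s [^] M) @ replicate (m mod M) s"
    have "word_eval G ?ws = (s [^] M) [^] (m div M) \<otimes> s [^] (m mod M)"
      using we_append[of "replicate (m div M) (s [^] M)" "replicate (m mod M) s"]
        we_replicate[of "s [^] M" "m div M"] we_replicate[of s "m mod M"] sc
      by (simp add: set_replicate_conv_if)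
    also have "\<dots> = s [^] (M * (m div M) + m mod M)" using sc by (simp add: nat_pow_pow nat_pow_mult)
    also have "\<dots> = s [^] m" by simp
    finally have e: "word_eval G ?ws = s [^] m" .
    have "M * length ?ws = M * (m div M) + M * (m mod M)" by (simp add: algebra_simps)
    also have "\<dots> \<le> m + M * M"
    proof -
      have "M * (m div M) \<le> m" by simp
      moreover have "m mod M < M" using M_def by simp
      then have "M * (m mod M) \<le> M * M" by simp
      ultimately show ?thesis by linarith
    qed
    finally show "\<exists>ws. set ws \<subseteq> XX \<and> word_eval G ws = s [^] m \<and> M * length ws \<le> m + M * M"
      using e sM by (intro exI[of _ ?ws]) (auto simp: set_replicate_conv_if)
  qed
  have regroup: "\<And>V \<omega>. set \<omega> \<subseteq> set V \<Longrightarrow> set V \<subseteq> CC \<Longrightarrow> \<exists>w'. set w' \<subseteq> XX \<and>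
      word_eval G w' = word_eval G \<omega> \<and> M * length w' \<le> length \<omega> + M * (M + 2) * length V"
  proof -
    fix V show "\<And>\<omega>. set \<omega> \<subseteq> set V \<Longrightarrow> set V \<subseteq> CC \<Longrightarrow> \<exists>w'. set w' \<subseteq> XX \<and>
      word_eval G w' = word_eval G \<omega> \<and> M * length w' \<le> length \<omega> + M * (M + 2) * length V"
    proof (induction V)
      case Nil then show ?case by (intro exI[of _ "[]"]) simp
    next
      case (Cons v V \<omega>)
      have vCC: "v \<in> CC" and VCC: "set V \<subseteq> CC" using Cons.prems by auto
      have \<omega>CC: "set \<omega> \<subseteq> CC" using Cons.prems by auto
      define \<omega>1 where "\<omega>1 = filter (HOL.eq v) \<omega>"
      define \<omega>2 where "\<omega>2 = filter (\<lambda>z. \<not> HOL.eq v z) \<omega>"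
      define m where "m = count (mset \<omega>) v"
      have \<omega>1r: "\<omega>1 = replicate m v" unfolding \<omega>1_def m_def by (rule replicate_count_mset_eq_filter_eq[symmetric])
      have ms: "mset \<omega> = mset (\<omega>1 @ \<omega>2)"
        unfolding \<omega>1_def \<omega>2_def by (simp add: mset_filter multiset_partition[symmetric])
      have c1: "set \<omega>1 \<subseteq> carrier G" "set \<omega>2 \<subseteq> carrier G" using \<omega>CC CC_car by (auto simp: \<omega>1_def \<omega>2_def)
      have ev: "word_eval G \<omega> = word_eval G \<omega>1 \<otimes> word_eval G \<omega>2"
        using perm_word[OF CC_car CC_comm \<omega>CC ms] we_append[OF c1] by simp
      have len: "length \<omega> = m + length \<omega>2"
        using sum_length_filter_compl[of "HOL.eq v" \<omega>] \<omega>1r unfolding \<omega>1_def \<omega>2_def by simp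
      have \<omega>2V: "set \<omega>2 \<subseteq> set V" using Cons.prems(1) by (auto simp: \<omega>2_def)
      obtain w2 where w2: "set w2 \<subseteq> XX" "word_eval G w2 = word_eval G \<omega>2"
        "M * length w2 \<le> length \<omega>2 + M * (M + 2) * length V" using Cons.IH[OF \<omega>2V VCC] by blast
      obtain r s where r: "r \<in> R" and s: "s \<in> {x, inv x}" and vr: "v = r \<otimes> s \<otimes> inv r"
        using CC_form[OF vCC] by blast
      have rc: "r \<in> carrier G" using r R_sub by auto
      have sc: "s \<in> carrier G" using s x by auto
      obtain ws where ws: "set ws \<subseteq> XX" "word_eval G ws = s [^] m" "M * length ws \<le> m + M * M"
        using powword[OF s] by blast
      let ?wv = "r # ws @ [inv r]"
      have wsc: "set ws \<subseteq> carrier G" using ws XX_sub by auto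
      have "word_eval G ?wv = r \<otimes> (s [^] m \<otimes> inv r)"
        using we_append[OF wsc, of "[inv r]"] ws rc by simp
      also have "\<dots> = v [^] m" using conj_pow[OF rc sc, of m] vr rc sc by (simp add: m_assoc)
      also have "\<dots> = word_eval G \<omega>1" using \<omega>1r we_replicate vCC CC_car by auto
      finally have evw: "word_eval G ?wv = word_eval G \<omega>1" .
      have wvX: "set ?wv \<subseteq> XX" using ws R_X[OF r] by auto
      have wvc: "set ?wv \<subseteq> carrier G" using wvX XX_sub by auto
      have w2c: "set w2 \<subseteq> carrier G" using w2 XX_sub by auto
      show ?case
      proof (intro exI[of _ "?wv @ w2"] conjI)
        show "set (?wv @ w2) \<subseteq> XX" using wvX w2 by auto
        show "word_eval G (?wv @ w2) = word_eval G \<omega>"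
          using we_append[OF wvc w2c] evw w2(2) ev by simp
        have "M * length (?wv @ w2) = M * length ws + 2 * M + M * length w2" by (simp add: algebra_simps)
        also have "\<dots> \<le> (m + M * M) + 2 * M + (length \<omega>2 + M * (M + 2) * length V)"
          using ws(3) w2(3) by linarith
        also have "\<dots> = length \<omega> + M * (M + 2) * length (v # V)" using len by (simp add: algebra_simps)
        finally show "M * length (?wv @ w2) \<le> length \<omega> + M * (M + 2) * length (v # V)" .
      qed
    qed
  qed
  obtain V where V: "set V = CC" using finite_list[OF CC_fin] by blast
  define E where "E = D + M * (M + 2) * length V + M"
  have geo_bound: "\<And>w. geodesic G XX w \<Longrightarrow> nM w \<le> E"
  proof -
    fix w assume g: "geodesic G XX w"
    then have wX: "set w \<subseteq> XX" and wl: "length w = word_length G XX (word_eval G w)"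
      by (auto simp: geodesic_def)
    obtain \<delta> r where d: "set \<delta> \<subseteq> CC" "r \<in> R" "word_eval G w = word_eval G \<delta> \<otimes> r"
      "length \<delta> \<le> D * nM w + M * mM w + D" using invariant[OF wX] by blast
    obtain w' where w': "set w' \<subseteq> XX" "word_eval G w' = word_eval G \<delta>"
      "M * length w' \<le> length \<delta> + M * (M + 2) * length V" using regroup[of \<delta> V] d(1) V by auto
    have w'c: "set w' \<subseteq> carrier G" using w' XX_sub by auto
    have rc: "r \<in> carrier G" using d R_sub by auto
    have "word_eval G (w' @ [r]) = word_eval G w"
      using we_append[OF w'c, of "[r]"] rc w'(2) d(3) by simp
    moreover have "set (w' @ [r]) \<subseteq> XX" using w'(1) R_X[OF d(2)] by auto
    ultimately have "word_length G XX (word_eval G w) \<le> length (w' @ [r])"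
      using word_length_le[of "w' @ [r]" XX G] by simp
    then have lw: "length w \<le> length w' + 1" using wl by simp
    have split: "length w = nM w + mM w"
      using sum_length_filter_compl[of "\<lambda>a. a \<in> Ms" w] unfolding nM_def mM_def by simp
    have "M * length w \<le> M * (length w' + 1)" using lw by (rule mult_le_mono2)
    then have "M * length w \<le> M * length w' + M" by simp
    also have "\<dots> \<le> D * nM w + M * mM w + D + M * (M + 2) * length V + M" using w'(3) d(4) by linarith
    finally have "M * (nM w + mM w) \<le> D * nM w + M * mM w + E" unfolding split E_def by simp
    then show "nM w \<le> E" unfolding M_def by (simp add: algebra_simps)
  qed
  have geo_adj: "\<And>w. geodesic G XX w \<Longrightarrow> \<forall>p a b q. w = p @ a # b # q \<longrightarrow> a \<noteq> b \<longrightarrow> \<not> (a \<in> Ms \<and> b \<in> Ms)"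
  proof (intro allI impI notI)
    fix w p a b q assume g: "geodesic G XX w" and wpq: "w = p @ a # b # q" and ab: "a \<noteq> b"
      and abM: "a \<in> Ms \<and> b \<in> Ms"
    have wX: "set w \<subseteq> XX" and wl: "length w = word_length G XX (word_eval G w)"
      using g by (auto simp: geodesic_def)
    have xM: "x [^] M \<in> carrier G" using x by simp
    have ab1: "a \<otimes> b = \<one>" using abM ab xM by (auto simp: Ms_def)
    have pc: "set p \<subseteq> carrier G" "set q \<subseteq> carrier G" "a \<in> carrier G" "b \<in> carrier G"
      using wX XX_sub wpq by auto
    have "word_eval G w = word_eval G p \<otimes> (a \<otimes> (b \<otimes> word_eval G q))"
      using we_append[of p "a # b # q"] pc wpq by simp
    also have "\<dots> = word_eval G p \<otimes> word_eval G q"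
      using ab1 pc by (simp add: m_assoc[symmetric])
    also have "\<dots> = word_eval G (p @ q)" using we_append pc by simp
    finally have "word_length G XX (word_eval G w) \<le> length (p @ q)"
      using word_length_le[of "p @ q" XX G] wX wpq by auto
    then show False using wl wpq by simp
  qed
  have geo_chg: "\<And>w. geodesic G XX w \<Longrightarrow> chg w \<le> 2 * E"
  proof -
    fix w assume g: "geodesic G XX w"
    have "chg w \<le> 2 * length (filter (\<lambda>a. \<not> a \<in> Ms) w)"
      using chg_bound[of w "\<lambda>a. a \<in> Ms", OF geo_adj[OF g]] by linarith
    then show "chg w \<le> 2 * E" using geo_bound[OF g] unfolding nM_def by linarith
  qed
  obtain c d where cd: "\<forall>n::nat. n \<ge> 1 \<longrightarrow> card {w. set w \<subseteq> XX \<and> length w \<le> n \<and> chg w \<le> 2 * E} \<le> c * n ^ d"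
    using count_words[OF XX_fin, of "2 * E"] by blast
  have fsgs: "finite_symmetric_generating_set G XX"
    unfolding finite_symmetric_generating_set_def
  proof (intro conjI)
    show "finite XX" by (rule XX_fin)
    show "XX \<subseteq> carrier G" by (rule XX_sub)
    show "\<forall>y\<in>XX. inv y \<in> XX"
      using S0(2) R_sub x by (auto simp: XX_def X0_def Ms_def)
    show "generate G XX = carrier G"
    proof
      show "generate G XX \<subseteq> carrier G" by (rule generate_incl[OF XX_sub])
      have "S0 \<subseteq> XX" by (auto simp: XX_def X0_def)
      then show "carrier G \<subseteq> generate G XX" using mono_generate S0(3) by blast
    qed
  qed
  show ?thesis
  proof (intro exI conjI allI impI)
    show "finite_symmetric_generating_set G XX" by (rule fsgs)
    fix n :: nat assume n: "n \<ge> 1"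
    have sub: "{w. geodesic G XX w \<and> length w \<le> n} \<subseteq> {w. set w \<subseteq> XX \<and> length w \<le> n \<and> chg w \<le> 2 * E}"
      using geo_chg by (auto simp: geodesic_def)
    have fin: "finite {w. set w \<subseteq> XX \<and> length w \<le> n \<and> chg w \<le> 2 * E}"
      by (rule finite_subset[OF _ finite_lists_length_le[OF XX_fin, of n]]) auto
    have "geodesic_growth G XX n \<le> card {w. set w \<subseteq> XX \<and> length w \<le> n \<and> chg w \<le> 2 * E}"
      unfolding geodesic_growth_def by (rule card_mono[OF fin sub])
    also have "\<dots> \<le> c * n ^ d" using cd n by blast
    finally show "geodesic_growth G XX n \<le> c * n ^ d" .
  qed
qed

theorem mainTheorem1:
  fixes G :: "('a, 'b) monoid_scheme"
  assumes "group G"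
    and "finitely_generated G"
    and "\<exists>x \<in> carrier G.
           (\<forall>a \<in> normal_closure G x. \<forall>b \<in> normal_closure G x. a \<otimes>\<^bsub>G\<^esub> b = b \<otimes>\<^bsub>G\<^esub> a)
           \<and> finite (rcosets\<^bsub>G\<^esub> (normal_closure G x))"
  shows "\<exists>Y. finite_symmetric_generating_set G Y \<and>
           (\<exists>c d :: nat. \<forall>n :: nat. n \<ge> 1 \<longrightarrow> geodesic_growth G Y n \<le> c * n ^ d)"
  using group.main_aux[OF assms] .

end
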